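(* Let $(G_k)_{k\in\mathbb Z}$ be a gibonacci sequence. For every positive integer $n$ and every integer $t$, \begin{equation*} \begin{split} 44\sum_{j = 1}^n G_{j + t}^5 &= -\left(G_{n + t + 3}^5 - G_{t + 3}^5\right) + 7\left(G_{n + t + 2}^5 - G_{t + 2}^5\right) + 47\left(G_{n + t + 1}^5 - G_{t + 1}^5\right)\\ &\qquad + 31\left(G_{n + t}^5 - G_t^5\right) - 9\left(G_{n + t - 1}^5 - G_{t - 1}^5\right) - \left(G_{n + t - 2}^5 - G_{t - 2}^5\right) \end{split} \end{equation*} and \begin{equation*} \begin{split} 44\sum_{j = 1}^n (-1)^{j - 1}G_{j + t}^5 &= -\left((-1)^{n + 1}G_{n + t + 3}^5 + G_{t + 3}^5\right) + 9\left((-1)^{n + 1}G_{n + t + 2}^5 + G_{t + 2}^5\right)\\ &\quad + 31\left((-1)^{n + 1}G_{n + t + 1}^5 + G_{t + 1}^5\right) - 47\left((-1)^{n + 1}G_{n + t}^5 + G_t^5\right)\\ &\quad + 7\left((-1)^{n + 1}G_{n + t - 1}^5 + G_{t - 1}^5\right) + \left((-1)^{n + 1}G_{n + t - 2}^5 + G_{t - 2}^5\right). \end{split} \end{equation*}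
   Context: A gibonacci sequence $(G_k)_{k\in\mathbb Z}$ is defined by arbitrary initial values $G_0=a$, $G_1=b$ (numbers, not both zero) and $G_k=G_{k-1}+G_{k-2}$ for all integers $k$ (equivalently $G_{-k}=G_{-(k-2)}-G_{-(k-1)}$ extends it to negative indices). *)

theory Defs
  imports Complex_Main
begin

definition gibonacci :: "(int \<Rightarrow> complex) \<Rightarrow> bool" where
  "gibonacci G \<longleftrightarrow> (G 0 \<noteq> 0 \<or> G 1 \<noteq> 0) \<and> (\<forall>k::int. G k = G (k - 1) + G (k - 2))"

end

theory Submission
  imports Defs
begin

lemma gib_rec: assumes "gibonacci G" shows "G (k + 2) = G (k + 1) + G k"
  using assms unfolding gibonacci_def
  by (metis add_diff_cancel_right' diff_add_eq_diff_diff_swap diff_diff_eq one_add_one)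

lemma gib_vals:
  assumes "gibonacci G"
  shows "G (m + 1) = G (m - 1) + G m" "G (m + 2) = G (m - 1) + 2 * G m"
        "G (m + 3) = 2 * G (m - 1) + 3 * G m" "G (m + 4) = 3 * G (m - 1) + 5 * G m"
        "G (m - 2) = G m - G (m - 1)"
proof -
  have r: "\<And>k. G (k + 2) = G (k + 1) + G k" using gib_rec[OF assms] .
  have 1: "G (m + 1) = G (m - 1) + G m" using r[of "m - 1"] by (simp add: add.commute)
  have 2: "G (m + 2) = G (m - 1) + 2 * G m" using r[of m] 1 by simp
  have 3: "G (m + 3) = 2 * G (m - 1) + 3 * G m" using r[of "m+1"] 1 2
    by (simp add: add.assoc) 
  have 4: "G (m + 4) = 3 * G (m - 1) + 5 * G m" using r[of "m+2"] 2 3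
    by (simp add: add.assoc)
  have 5: "G (m - 2) = G m - G (m - 1)" using r[of "m - 2"] by simp
  show "G (m + 1) = G (m - 1) + G m" "G (m + 2) = G (m - 1) + 2 * G m"
        "G (m + 3) = 2 * G (m - 1) + 3 * G m" "G (m + 4) = 3 * G (m - 1) + 5 * G m"
        "G (m - 2) = G m - G (m - 1)" using 1 2 3 4 5 by auto
qed

theorem proposition1:
  fixes G :: "int \<Rightarrow> complex" and n :: nat and t :: int
  assumes "gibonacci G" and "n \<ge> 1"
  shows "(44 * (\<Sum>j=1..n. G (int j + t) ^ 5) =
           - (G (int n + t + 3) ^ 5 - G (t + 3) ^ 5)
           + 7 * (G (int n + t + 2) ^ 5 - G (t + 2) ^ 5)
           + 47 * (G (int n + t + 1) ^ 5 - G (t + 1) ^ 5)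
           + 31 * (G (int n + t) ^ 5 - G t ^ 5)
           - 9 * (G (int n + t - 1) ^ 5 - G (t - 1) ^ 5)
           - (G (int n + t - 2) ^ 5 - G (t - 2) ^ 5)) \<and>
         (44 * (\<Sum>j=1..n. (-1) ^ (j - 1) * G (int j + t) ^ 5) =
           - ((-1) ^ (n + 1) * G (int n + t + 3) ^ 5 + G (t + 3) ^ 5)
           + 9 * ((-1) ^ (n + 1) * G (int n + t + 2) ^ 5 + G (t + 2) ^ 5)
           + 31 * ((-1) ^ (n + 1) * G (int n + t + 1) ^ 5 + G (t + 1) ^ 5)
           - 47 * ((-1) ^ (n + 1) * G (int n + t) ^ 5 + G t ^ 5)
           + 7 * ((-1) ^ (n + 1) * G (int n + t - 1) ^ 5 + G (t - 1) ^ 5)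
           + ((-1) ^ (n + 1) * G (int n + t - 2) ^ 5 + G (t - 2) ^ 5))"
proof -
  have key1: "44 * G (m + 1) ^ 5 =
      - (G (m + 4) ^ 5 - G (m + 3) ^ 5) + 7 * (G (m + 3) ^ 5 - G (m + 2) ^ 5)
      + 47 * (G (m + 2) ^ 5 - G (m + 1) ^ 5) + 31 * (G (m + 1) ^ 5 - G m ^ 5)
      - 9 * (G m ^ 5 - G (m - 1) ^ 5) - (G (m - 1) ^ 5 - G (m - 2) ^ 5)" for m
    unfolding gib_vals[OF assms(1), of m] by algebra
  have key2: "44 * G (m + 1) ^ 5 =
      - (G (m + 4) ^ 5 + G (m + 3) ^ 5) + 9 * (G (m + 3) ^ 5 + G (m + 2) ^ 5)
      + 31 * (G (m + 2) ^ 5 + G (m + 1) ^ 5) - 47 * (G (m + 1) ^ 5 + G m ^ 5)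
      + 7 * (G m ^ 5 + G (m - 1) ^ 5) + (G (m - 1) ^ 5 + G (m - 2) ^ 5)" for m
    unfolding gib_vals[OF assms(1), of m] by algebra
  have A: "44 * (\<Sum>j=1..n. G (int j + t) ^ 5) =
           - (G (int n + t + 3) ^ 5 - G (t + 3) ^ 5)
           + 7 * (G (int n + t + 2) ^ 5 - G (t + 2) ^ 5)
           + 47 * (G (int n + t + 1) ^ 5 - G (t + 1) ^ 5)
           + 31 * (G (int n + t) ^ 5 - G t ^ 5)
           - 9 * (G (int n + t - 1) ^ 5 - G (t - 1) ^ 5)
           - (G (int n + t - 2) ^ 5 - G (t - 2) ^ 5)" for n
  proof (induction n)
    case 0 then show ?case by simp
  next
    case (Suc n)
    define m where "m = int n + t"
    have e: "G (int (Suc n) + t + 3) = G (m + 4)" "G (int (Suc n) + t + 2) = G (m + 3)"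
      "G (int (Suc n) + t + 1) = G (m + 2)" "G (int (Suc n) + t) = G (m + 1)"
      "G (int (Suc n) + t - 1) = G m" "G (int (Suc n) + t - 2) = G (m - 1)"
      "G (int n + t + 3) = G (m + 3)" "G (int n + t + 2) = G (m + 2)"
      "G (int n + t + 1) = G (m + 1)" "G (int n + t) = G m"
      "G (int n + t - 1) = G (m - 1)" "G (int n + t - 2) = G (m - 2)"
      unfolding m_def by (simp_all add: algebra_simps)
    have sm: "(\<Sum>j=1..Suc n. G (int j + t) ^ 5) = (\<Sum>j=1..n. G (int j + t) ^ 5) + G (int (Suc n) + t) ^ 5"
      by simp
    show ?case
      unfolding sm distrib_left Suc unfolding e using key1[of m] by (simp add: algebra_simps)
  qed
  have B: "44 * (\<Sum>j=1..n. (-1) ^ (j - 1) * G (int j + t) ^ 5) =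
           - ((-1) ^ (n + 1) * G (int n + t + 3) ^ 5 + G (t + 3) ^ 5)
           + 9 * ((-1) ^ (n + 1) * G (int n + t + 2) ^ 5 + G (t + 2) ^ 5)
           + 31 * ((-1) ^ (n + 1) * G (int n + t + 1) ^ 5 + G (t + 1) ^ 5)
           - 47 * ((-1) ^ (n + 1) * G (int n + t) ^ 5 + G t ^ 5)
           + 7 * ((-1) ^ (n + 1) * G (int n + t - 1) ^ 5 + G (t - 1) ^ 5)
           + ((-1) ^ (n + 1) * G (int n + t - 2) ^ 5 + G (t - 2) ^ 5)" for n
  proof (induction n)
    case 0 then show ?case by simp
  next
    case (Suc n)
    define m where "m = int n + t"
    have e: "G (int (Suc n) + t + 3) = G (m + 4)" "G (int (Suc n) + t + 2) = G (m + 3)"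
      "G (int (Suc n) + t + 1) = G (m + 2)" "G (int (Suc n) + t) = G (m + 1)"
      "G (int (Suc n) + t - 1) = G m" "G (int (Suc n) + t - 2) = G (m - 1)"
      "G (int n + t + 3) = G (m + 3)" "G (int n + t + 2) = G (m + 2)"
      "G (int n + t + 1) = G (m + 1)" "G (int n + t) = G m"
      "G (int n + t - 1) = G (m - 1)" "G (int n + t - 2) = G (m - 2)"
      unfolding m_def by (simp_all add: algebra_simps)
    define s :: complex where "s = (-1) ^ (n + 1)"
    have ss: "(-1::complex) ^ (Suc n + 1) = - s" "(-1::complex) ^ (Suc n - 1) = - s"
      unfolding s_def by simp_all
    have sm: "(\<Sum>j=1..Suc n. (-1) ^ (j - 1) * G (int j + t) ^ 5) = (\<Sum>j=1..n. (-1) ^ (j - 1) * G (int j + t) ^ 5) + (-1) ^ (Suc n - 1) * G (int (Suc n) + t) ^ 5"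
      by simp
    have k: "44 * s * G (m + 1) ^ 5 =
      - s * (G (m + 4) ^ 5 + G (m + 3) ^ 5) + 9 * s * (G (m + 3) ^ 5 + G (m + 2) ^ 5)
      + 31 * s * (G (m + 2) ^ 5 + G (m + 1) ^ 5) - 47 * s * (G (m + 1) ^ 5 + G m ^ 5)
      + 7 * s * (G m ^ 5 + G (m - 1) ^ 5) + s * (G (m - 1) ^ 5 + G (m - 2) ^ 5)"
      using arg_cong[OF key2[of m], of "\<lambda>x. s * x"] by (simp add: algebra_simps)
    show ?case
      unfolding sm distrib_left Suc unfolding e ss s_def[symmetric] using k by (simp add: algebra_simps)
  qed
  show ?thesis using A B by blast
qed

end
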